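(* Let $\mathscr{A},\mathscr{B}$ be real Banach spaces and let $p,p'\in(1,+\infty)$ with $1/p+1/p'=1$. Suppose that $(\lambda,\mu)\in(\mathscr{A}^*\oplus_{p'}\mathscr{B}^* )\setminus\{(0,0)\}$ is norming for $(\mathbf{a},\mathbf{b})\in(\mathscr{A}\oplus_p\mathscr{B})\setminus\{(0,0)\}$. Then: 1. If $\mathbf{b}=0$, then $\mu=0$ and $\lambda$ is norming for $\mathbf{a}$. 2. If $\mathbf{a}=0$, then $\lambda=0$ and $\mu$ is norming for $\mathbf{b}$. 3. If $\mathbf{a}\neq0$ and $\mathbf{b}\neq0$, then $\lambda\neq0$, $\mu\neq0$, $\big(1+\|\mathbf{b}\|_{\mathscr{B}}^p/\|\mathbf{a}\|_{\mathscr{A}}^p\big)^{1/p'}\lambda$ is norming for $\mathbf{a}$, and $\big(1+\|\mathbf{a}\|_{\mathscr{A}}^p/\|\mathbf{b}\|_{\mathscr{B}}^p\big)^{1/p'}\mu$ is norming for $\mathbf{b}$.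
   Context: For Banach spaces $\mathscr{A},\mathscr{B}$ and $q\in[1,\infty)$, $\mathscr{A}\oplus_q\mathscr{B}$ is the Cartesian product with componentwise operations and norm $\|(\mathbf{a},\mathbf{b})\|=(\|\mathbf{a}\|_{\mathscr{A}}^q+\|\mathbf{b}\|_{\mathscr{B}}^q)^{1/q}$. The dual of $\mathscr{A}\oplus_p\mathscr{B}$ is identified with $\mathscr{A}^*\oplus_{p'}\mathscr{B}^*$ via the pairing $\langle(\mathbf{a},\mathbf{b}),(\lambda,\mu)\rangle=\lambda(\mathbf{a})+\mu(\mathbf{b})$. A functional $\phi$ in the dual of a Banach space $\mathscr{C}$ is norming for a nonzero $\mathbf{c}\in\mathscr{C}$ if $\|\phi\|=1$ and $\phi(\mathbf{c})=\|\mathbf{c}\|_{\mathscr{C}}$. *)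

theory Defs
  imports "HOL-Analysis.Analysis"
begin

text \<open>The q-norm on a pair of norms: the norm of (x,y) in X (+)_q Y is
  lp2_norm q (norm x) (norm y).\<close>
definition lp2_norm :: "real \<Rightarrow> real \<Rightarrow> real \<Rightarrow> real" where
  "lp2_norm q s t = (s powr q + t powr q) powr (1 / q)"

definition norming :: "('c::real_normed_vector \<Rightarrow>\<^sub>L real) \<Rightarrow> 'c \<Rightarrow> bool" where
  "norming \<phi> c \<longleftrightarrow> c \<noteq> 0 \<and> norm \<phi> = 1 \<and> blinfun_apply \<phi> c = norm c"

text \<open>(lam,mu) in A^* (+)_{p'} B^* (the dual of A (+)_p B, via the pairing
  lam(a)+mu(b)) is norming for a nonzero (a,b) in A (+)_p B.\<close>
definition norming_sum ::
  "real \<Rightarrow> real \<Rightarrow> ('a::real_normed_vector \<Rightarrow>\<^sub>L real) \<Rightarrow> ('b::real_normed_vector \<Rightarrow>\<^sub>L real)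
     \<Rightarrow> 'a \<Rightarrow> 'b \<Rightarrow> bool" where
  "norming_sum p p' lam mu a b \<longleftrightarrow>
     (a, b) \<noteq> (0, 0) \<and> lp2_norm p' (norm lam) (norm mu) = 1 \<and>
     blinfun_apply lam a + blinfun_apply mu b = lp2_norm p (norm a) (norm b)"

end

theory Submission
  imports Defs
begin

lemma exp_strict: "(x::real) \<noteq> 0 \<Longrightarrow> 1 + x < exp x"
proof (cases "1 + x/2 \<ge> 0")
  case True
  assume x: "x \<noteq> 0"
  have "1 + x/2 \<le> exp (x/2)" by simp
  hence "(1 + x/2)^2 \<le> exp (x/2) ^ 2" using True by (rule power_mono)
  also have "exp (x/2) ^ 2 = exp x" by (simp flip: exp_of_nat_mult)
  finally have "(1 + x/2)^2 \<le> exp x" .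
  moreover have "1 + x < (1 + x/2)^2"
  proof -
    have "0 < x * x" using x by (auto simp add: zero_less_mult_iff)
    thus ?thesis by (simp add: power2_eq_square algebra_simps)
  qed
  ultimately show ?thesis by linarith
next
  case False
  then show ?thesis using exp_gt_zero[of x] by linarith
qed

lemma amgm_strict:
  fixes s r al be :: real
  assumes "al > 0" "be > 0" "al + be = 1" "s > 0" "r > 0" "s \<noteq> r"
  shows "s powr al * r powr be < al * s + be * r"
proof -
  define M where "M = al * s + be * r"
  have M: "M > 0" using assms by (simp add: M_def add_pos_pos)
  define x where "x = ln (s / M)"
  define y where "y = ln (r / M)"
  have ex: "exp x = s / M" using M assms by (simp add: x_def)
  have ey: "exp y = r / M" using M assms by (simp add: y_def)
  have "s \<noteq> M"
  proof
    assume "s = M"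
    moreover have "al = 1 - be" using assms by simp
    ultimately have "be * (r - s) = 0" by (auto simp add: M_def algebra_simps)
    thus False using assms by auto
  qed
  hence "x \<noteq> 0" using ex M by auto
  hence "1 + x < exp x" by (rule exp_strict)
  moreover have "1 + y \<le> exp y" by simp
  moreover have "al * exp x + be * exp y = 1"
  proof -
    have "al * exp x + be * exp y = (al * s + be * r) / M" by (simp add: ex ey add_divide_distrib)
    thus ?thesis using M by (simp add: M_def)
  qed
  ultimately have "al * (1 + x) + be * (1 + y) < 1"
    using assms by (smt (verit) mult_left_mono mult_strict_left_mono)
  hence neg: "al * x + be * y < 0" using assms by (simp add: algebra_simps)
  have "s powr al * r powr be = exp (al * ln s + be * ln r)"
    using assms by (simp add: powr_def exp_add mult.commute)
  also have "al * ln s + be * ln r = al * x + be * y + ln M"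
    using assms M by (simp add: x_def y_def ln_div algebra_simps flip: distrib_right)
  also have "exp (al * x + be * y + ln M) = exp (al * x + be * y) * M"
    using M by (simp add: exp_add)
  also have "\<dots> < 1 * M" using neg M by (intro mult_strict_right_mono) auto
  finally show ?thesis by (simp add: M_def)
qed

lemma young_eq:
  fixes p q x y :: real
  assumes "p > 1" "q > 1" "1/p + 1/q = 1" "x \<ge> 0" "y \<ge> 0"
    and eq: "x * y = x powr p / p + y powr q / q"
  shows "x powr p = y powr q"
proof (cases "x = 0 \<or> y = 0")
  case True
  then show ?thesis using eq assms by auto
next
  case False
  with assms have xy: "x > 0" "y > 0" by auto
  show ?thesis
  proof (rule ccontr)
    assume ne: "x powr p \<noteq> y powr q"
    have "(x powr p) powr (1/p) * (y powr q) powr (1/q) < (1/p) * x powr p + (1/q) * y powr q"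
      using assms xy ne by (intro amgm_strict) auto
    moreover have "(x powr p) powr (1/p) = x" "(y powr q) powr (1/q) = y"
      using assms xy by (simp_all add: powr_powr)
    ultimately show False using eq by simp
  qed
qed

lemma core:
  fixes p q A B l m la mb :: real
  assumes pq: "p > 1" "q > 1" "1/p + 1/q = 1"
    and AB: "A \<ge> 0" "B \<ge> 0" "A > 0 \<or> B > 0"
    and lm: "l \<ge> 0" "m \<ge> 0" "(l powr q + m powr q) powr (1/q) = 1"
    and bd: "la \<le> l * A" "mb \<le> m * B"
    and eq: "la + mb = (A powr p + B powr p) powr (1/p)"
  shows "la = l * A \<and> mb = m * B \<and> l powr q = A powr p / (A powr p + B powr p)
     \<and> m powr q = B powr p / (A powr p + B powr p)"
proof -
  define S where "S = A powr p + B powr p"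
  have S: "S > 0" using AB by (auto simp: S_def add_pos_nonneg add_nonneg_pos)
  define N where "N = S powr (1/p)"
  have N: "N > 0" using S by (simp add: N_def)
  have NS: "N powr p = S" using S pq by (simp add: N_def powr_powr)
  define u where "u = A / N"
  define v where "v = B / N"
  have u: "u \<ge> 0" "v \<ge> 0" using AB N by (auto simp: u_def v_def)
  have up: "u powr p = A powr p / S" "v powr p = B powr p / S"
    using AB N NS by (simp_all add: u_def v_def powr_divide)
  have lmq: "l powr q + m powr q = 1"
  proof -
    have "l powr q + m powr q = ((l powr q + m powr q) powr (1/q)) powr q"
      using pq by (simp add: powr_powr)
    thus ?thesis using lm by simp
  qed
  have y1: "l * u \<le> l powr q / q + u powr p / p"
    using Youngs_inequality[of q p l u] pq lm u by (simp add: add.commute)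
  have y2: "m * v \<le> m powr q / q + v powr p / p"
    using Youngs_inequality[of q p m v] pq lm u by (simp add: add.commute)
  have sum1: "(l powr q / q + u powr p / p) + (m powr q / q + v powr p / p) = 1"
  proof -
    have "(l powr q / q + u powr p / p) + (m powr q / q + v powr p / p)
        = (l powr q + m powr q) / q + ((A powr p + B powr p) / S) / p"
      using up by (simp add: add_divide_distrib)
    also have "\<dots> = 1/q + 1/p" using lmq S by (simp add: S_def)
    finally show ?thesis using pq by simp
  qed
  have lu: "l * u + m * v = (l * A + m * B) / N" by (simp add: u_def v_def add_divide_distrib)
  have "la + mb = N" using eq by (simp add: N_def S_def)
  hence "l * u + m * v \<ge> 1" using lu bd N by (simp add: le_divide_eq)
  hence e1: "l * u = l powr q / q + u powr p / p" and e2: "m * v = m powr q / q + v powr p / p"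
    using y1 y2 sum1 by linarith+
  have "l * A + m * B = N" using lu e1 e2 sum1 N
    by (metis divide_eq_1_iff less_irrefl)
  hence r1: "la = l * A" "mb = m * B" using \<open>la + mb = N\<close> bd by linarith+
  have "l powr q = u powr p" using young_eq[of q p l u] pq lm u e1 by (simp add: add.commute)
  moreover have "m powr q = v powr p" using young_eq[of q p m v] pq lm u e2 by (simp add: add.commute)
  ultimately show ?thesis using r1 up by (simp add: S_def)
qed

lemma scale_norming:
  fixes q A S l c :: real and lam :: "'a::real_normed_vector \<Rightarrow>\<^sub>L real" and a :: 'a
  assumes "q > 1" "a \<noteq> 0" "A = norm a" "l = norm lam" "S > 0" "A powr p > 0"
    and "l powr q = A powr p / S" "blinfun_apply lam a = l * A"
    and "c = (S / A powr p) powr (1/q)"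
  shows "norming (c *\<^sub>R lam) a"
proof -
  have l: "l = (A powr p / S) powr (1/q)"
  proof -
    have "l = (l powr q) powr (1/q)" using assms(1,4) by (simp add: powr_powr)
    thus ?thesis by (simp only: assms(7))
  qed
  have c: "c \<ge> 0" using assms by simp
  have "c * l = (S / A powr p) powr (1/q) * (A powr p / S) powr (1/q)"
    by (simp only: assms(9) l[symmetric])
  also have "\<dots> = ((S / A powr p) * (A powr p / S)) powr (1/q)"
    using assms(5,6) by (intro powr_mult[symmetric])
  also have "\<dots> = 1" using assms by simp
  finally have cl: "c * l = 1" .
  have "blinfun_apply (c *\<^sub>R lam) a = c * blinfun_apply lam a"
    by (simp add: scaleR_blinfun.rep_eq)
  also have "\<dots> = (c * l) * A" using assms(8) by simp
  finally have ap: "blinfun_apply (c *\<^sub>R lam) a = norm a" using cl assms(3) by simp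
  have "norm (c *\<^sub>R lam) = c * l" using c assms(4) by simp
  thus ?thesis unfolding norming_def using assms(2) ap cl by simp
qed

theorem proposition3p1:
  fixes p p' :: real
    and lam :: "'a::banach \<Rightarrow>\<^sub>L real" and mu :: "'b::banach \<Rightarrow>\<^sub>L real"
    and a :: 'a and b :: 'b
  assumes "p > 1" and "p' > 1" and "1 / p + 1 / p' = 1"
    and "(lam, mu) \<noteq> (0, 0)"
    and "(a, b) \<noteq> (0, 0)"
    and "norming_sum p p' lam mu a b"
  shows "(b = 0 \<longrightarrow> mu = 0 \<and> norming lam a)
       \<and> (a = 0 \<longrightarrow> lam = 0 \<and> norming mu b)
       \<and> (a \<noteq> 0 \<and> b \<noteq> 0 \<longrightarrow>
            lam \<noteq> 0 \<and> mu \<noteq> 0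
          \<and> norming ((1 + norm b powr p / norm a powr p) powr (1 / p') *\<^sub>R lam) a
          \<and> norming ((1 + norm a powr p / norm b powr p) powr (1 / p') *\<^sub>R mu) b)"
proof -
  define A where "A = norm a"
  define B where "B = norm b"
  define l where "l = norm lam"
  define m where "m = norm mu"
  define S where "S = A powr p + B powr p"
  have bd1: "blinfun_apply lam a \<le> l * A"
    using norm_blinfun[of lam a] by (simp add: l_def A_def)
  have bd2: "blinfun_apply mu b \<le> m * B"
    using norm_blinfun[of mu b] by (simp add: m_def B_def)
  have AB: "A > 0 \<or> B > 0" using assms(5) by (auto simp: A_def B_def)
  have C: "blinfun_apply lam a = l * A \<and> blinfun_apply mu b = m * B
     \<and> l powr p' = A powr p / S \<and> m powr p' = B powr p / S"
    unfolding S_def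
    apply (rule core[OF assms(1,2,3) _ _ AB _ _ _ bd1 bd2])
    using assms(6) by (auto simp: A_def B_def l_def m_def norming_sum_def lp2_norm_def)
  have S: "S > 0" using AB by (auto simp: S_def add_pos_nonneg add_nonneg_pos A_def B_def)
  have lq: "l = (l powr p') powr (1/p')" "m = (m powr p') powr (1/p')"
    using assms(2) by (simp_all add: powr_powr l_def m_def)
  have P1: "b = 0 \<longrightarrow> mu = 0 \<and> norming lam a"
  proof
    assume b: "b = 0"
    hence a: "a \<noteq> 0" using assms(5) by auto
    have "m powr p' = 0" using C b assms(1) by (simp add: B_def)
    hence "m = 0" by (simp add: m_def)
    moreover have "l powr p' = 1" using C b a S by (simp add: S_def B_def A_def)
    hence "l = 1" using lq by simp
    ultimately show "mu = 0 \<and> norming lam a" using C a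
      by (simp add: m_def l_def norming_def A_def)
  qed
  have P2: "a = 0 \<longrightarrow> lam = 0 \<and> norming mu b"
  proof
    assume a: "a = 0"
    hence b: "b \<noteq> 0" using assms(5) by auto
    have "l powr p' = 0" using C a assms(1) by (simp add: A_def)
    hence "l = 0" by (simp add: l_def)
    moreover have "m powr p' = 1" using C b a S by (simp add: S_def B_def A_def)
    hence "m = 1" using lq by simp
    ultimately show "lam = 0 \<and> norming mu b" using C b
      by (simp add: m_def l_def norming_def B_def)
  qed
  have P3: "a \<noteq> 0 \<and> b \<noteq> 0 \<longrightarrow>
            lam \<noteq> 0 \<and> mu \<noteq> 0
          \<and> norming ((1 + norm b powr p / norm a powr p) powr (1 / p') *\<^sub>R lam) a
          \<and> norming ((1 + norm a powr p / norm b powr p) powr (1 / p') *\<^sub>R mu) b"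
  proof
    assume ab: "a \<noteq> 0 \<and> b \<noteq> 0"
    hence Ap: "A powr p > 0" "B powr p > 0" by (auto simp: A_def B_def)
    have "l powr p' > 0" "m powr p' > 0" using C Ap S by auto
    hence ne: "lam \<noteq> 0" "mu \<noteq> 0" by (auto simp: l_def m_def)
    have e1: "1 + norm b powr p / norm a powr p = S / A powr p"
      using Ap by (simp add: S_def A_def B_def field_simps)
    have e2: "1 + norm a powr p / norm b powr p = S / B powr p"
      using Ap by (simp add: S_def A_def B_def field_simps)
    have n1: "norming ((1 + norm b powr p / norm a powr p) powr (1 / p') *\<^sub>R lam) a"
      by (rule scale_norming[OF assms(2) _ A_def l_def S Ap(1)]) (use ab C e1 in auto)
    have n2: "norming ((1 + norm a powr p / norm b powr p) powr (1 / p') *\<^sub>R mu) b"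
      by (rule scale_norming[OF assms(2) _ B_def m_def S Ap(2)]) (use ab C e2 in auto)
    show "lam \<noteq> 0 \<and> mu \<noteq> 0
          \<and> norming ((1 + norm b powr p / norm a powr p) powr (1 / p') *\<^sub>R lam) a
          \<and> norming ((1 + norm a powr p / norm b powr p) powr (1 / p') *\<^sub>R mu) b"
      using ne n1 n2 by blast
  qed
  show ?thesis using P1 P2 P3 by blast
qed

end
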